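(* For every integer $d\ge 4$, there exist states $|\mu\rangle,|\lambda\rangle,|\bar\mu\rangle,|\bar\lambda\rangle\in\mathbb{C}^d\otimes\mathbb{C}^d$, all of full Schmidt rank $d$, with the following properties: (a) $|\mu\rangle\otimes|\lambda\rangle$ can be transformed into $|\bar\mu\rangle\otimes|\bar\lambda\rangle$ by a local unitary; (b) the transformation is non-trivial: it is not the case that ($|\bar\mu\rangle$ is LU-equivalent to $|\mu\rangle$ and $|\bar\lambda\rangle$ is LU-equivalent to $|\lambda\rangle$), and it is not the case that ($|\bar\mu\rangle$ is LU-equivalent to $|\lambda\rangle$ and $|\bar\lambda\rangle$ is LU-equivalent to $|\mu\rangle$).
   Context: The state $|\mu\rangle\otimes|\lambda\rangle$ is regarded as a bipartite state between two parties, each holding two $d$-dimensional subsystems. A local unitary is $U_A\otimes U_B$ with $U_A,U_B\in\mathrm{U}(d^2)$. Two bipartite states are LU-equivalent if they are related by a local unitary, equivalently if they have the same squared Schmidt coefficients up to reordering. *)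

theory Defs
  imports "HOL-Analysis.Analysis"
begin

text \<open>A bipartite pure state of two parties with local dimensions indexed by the
finite types 'a and 'b is represented by its coefficient matrix:
psi $ i $ j is the amplitude of the basis vector |i>_A |j>_B.\<close>

definition adj_mat :: "complex^'n^'m \<Rightarrow> complex^'m^'n" where
  "adj_mat U = (\<chi> i j. cnj (U $ j $ i))"

definition unitary_mat :: "complex^'n^'n \<Rightarrow> bool" where
  "unitary_mat U \<longleftrightarrow> U ** adj_mat U = mat 1 \<and> adj_mat U ** U = mat 1"

definition is_state :: "complex^'b^'a \<Rightarrow> bool" where
  "is_state psi \<longleftrightarrow> (\<Sum>i\<in>UNIV. \<Sum>j\<in>UNIV. (cmod (psi $ i $ j))\<^sup>2) = 1"

definition schmidt_rank :: "complex^'b^'a \<Rightarrow> nat" where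
  "schmidt_rank psi = rank psi"

text \<open>Action of the local unitary U_A \<otimes> U_B on a bipartite state:
the coefficient matrix C becomes U_A C U_B^T.\<close>
definition lu_apply :: "complex^'a^'a \<Rightarrow> complex^'b^'b \<Rightarrow> complex^'b^'a \<Rightarrow> complex^'b^'a" where
  "lu_apply UA UB psi = UA ** psi ** transpose UB"

definition LU_equiv :: "complex^'b^'a \<Rightarrow> complex^'b^'a \<Rightarrow> bool" where
  "LU_equiv phi psi \<longleftrightarrow>
     (\<exists>UA UB. unitary_mat UA \<and> unitary_mat UB \<and> psi = lu_apply UA UB phi)"

text \<open>The tensor product |mu> \<otimes> |lambda> of two bipartite states, regarded as a
bipartite state between A = (A1,A2) and B = (B1,B2): the amplitude of
|i1 i2>_A |j1 j2>_B is mu_{i1 j1} * lambda_{i2 j2}.\<close>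
definition tensor_state :: "complex^'n^'n \<Rightarrow> complex^'n^'n \<Rightarrow> complex^('n \<times> 'n)^('n \<times> 'n)" where
  "tensor_state mu lam = (\<chi> i j. mu $ fst i $ fst j * lam $ snd i $ snd j)"

end

theory Submission
  imports Defs "HOL-Computational_Algebra.Polynomial" "HOL-Library.Multiset"
begin

lemma exps_exist:
  assumes "size M = CARD('n::finite)"
  shows "\<exists>e::'n \<Rightarrow> nat. image_mset e (mset_set UNIV) = M"
proof -
  obtain xs where xs: "mset xs = M" using ex_mset by blast
  have len: "length xs = CARD('n)" using xs assms by (metis size_mset)
  obtain h :: "'n \<Rightarrow> nat" where h: "bij_betw h UNIV {0..<CARD('n)}"
    using ex_bij_betw_finite_nat[of "UNIV::'n set"] by auto
  have "image_mset (\<lambda>i. xs ! h i) (mset_set UNIV) = image_mset (nth xs) (image_mset h (mset_set UNIV))"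
    by (simp add: multiset.map_comp comp_def)
  also have "image_mset h (mset_set UNIV) = mset_set {0..<CARD('n)}"
    using h by (simp add: bij_betw_def image_mset_mset_set)
  also have "image_mset (nth xs) (mset_set {0..<CARD('n)}) = mset (map (nth xs) [0..<length xs])"
    by (simp add: len)
  also have "\<dots> = M" by (simp add: map_nth xs)
  finally show ?thesis by blast
qed

lemma mset_bij_aux:
  assumes "finite S" "finite T" "image_mset f (mset_set S) = image_mset g (mset_set T)"
  shows "\<exists>\<sigma>. bij_betw \<sigma> S T \<and> (\<forall>x\<in>S. g (\<sigma> x) = f x)"
  using assms
proof (induction S arbitrary: T rule: finite_induct)
  case empty
  then have "T = {}" by (metis image_mset_is_empty_iff mset_set_empty_iff)
  then show ?case by (auto simp: bij_betw_def)
next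
  case (insert a S)
  have "f a \<in># image_mset g (mset_set T)"
    using insert.prems insert.hyps by (metis image_mset_add_mset insert_DiffM mset_set.insert union_single_eq_member)
  then obtain b where b: "b \<in> T" "g b = f a" using insert.prems by auto
  have "image_mset f (mset_set S) = image_mset g (mset_set (T - {b}))"
  proof -
    have "add_mset (f a) (image_mset f (mset_set S)) = image_mset g (mset_set T)"
      using insert by simp
    also have "mset_set T = add_mset b (mset_set (T - {b}))"
      using b insert.prems by (simp add: mset_set.remove)
    finally show ?thesis using b by simp
  qed
  then obtain \<sigma> where s: "bij_betw \<sigma> S (T - {b})" "\<forall>x\<in>S. g (\<sigma> x) = f x"
    using insert by blast
  define \<tau> where "\<tau> = \<sigma>(a := b)"
  have "bij_betw \<tau> (insert a S) T"
  proof -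
    have "bij_betw \<tau> S (T - {b})" using s insert.hyps unfolding \<tau>_def
      by (metis bij_betw_cong fun_upd_other)
    then have "bij_betw \<tau> (S \<union> {a}) ((T - {b}) \<union> {\<tau> a})"
      using insert.hyps by (intro notIn_Un_bij_betw) (auto simp: \<tau>_def)
    then have "bij_betw \<tau> (insert a S) (insert b (T - {b}))"
      by (simp add: \<tau>_def)
    then show ?thesis using b by (simp add: insert_absorb)
  qed
  moreover have "\<forall>x\<in>insert a S. g (\<tau> x) = f x" using s b insert.hyps unfolding \<tau>_def by auto
  ultimately show ?case by blast
qed

lemma mset_bij:
  fixes f g :: "'p::finite \<Rightarrow> 'b"
  assumes "image_mset f (mset_set UNIV) = image_mset g (mset_set UNIV)"
  shows "\<exists>\<sigma>. bij \<sigma> \<and> (\<forall>x. g (\<sigma> x) = f x)"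
  using mset_bij_aux[OF finite_class.finite_UNIV finite_class.finite_UNIV assms] by auto

definition pm :: "nat multiset \<Rightarrow> int poly" where
  "pm M = sum_mset (image_mset (\<lambda>k. monom 1 k) M)"

lemma coeff_pm: "coeff (pm M) k = int (count M k)"
  by (induction M) (auto simp: pm_def)

lemma pm_inj: "pm M = pm N \<Longrightarrow> M = N"
  by (metis coeff_pm multiset_eqI of_nat_eq_iff)

lemma pm_set: "finite S \<Longrightarrow> pm (image_mset e (mset_set S)) = (\<Sum>i\<in>S. monom 1 (e i))"
  by (simp add: pm_def sum_unfold_sum_mset multiset.map_comp comp_def)

lemma pm_prod:
  fixes e1 e2 :: "'n::finite \<Rightarrow> nat"
  shows "pm (image_mset (\<lambda>p. e1 (fst p) + e2 (snd p)) (mset_set UNIV)) =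
    pm (image_mset e1 (mset_set UNIV)) * pm (image_mset e2 (mset_set UNIV))"
proof -
  have "pm (image_mset (\<lambda>p. e1 (fst p) + e2 (snd p)) (mset_set UNIV)) =
     (\<Sum>p\<in>(UNIV::'n set) \<times> (UNIV::'n set). monom 1 (e1 (fst p) + e2 (snd p)))"
    by (simp add: pm_set UNIV_Times_UNIV[symmetric] del: UNIV_Times_UNIV)
  also have "\<dots> = (\<Sum>i\<in>UNIV. \<Sum>j\<in>UNIV. monom 1 (e1 i) * monom 1 (e2 j))"
    by (simp add: sum.cartesian_product mult_monom split_beta)
  also have "\<dots> = (\<Sum>i\<in>UNIV. monom 1 (e1 i)) * (\<Sum>j\<in>UNIV. monom 1 (e2 j))"
    by (simp add: sum_product)
  finally show ?thesis by (simp add: pm_set)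
qed

abbreviation X :: "int poly" where "X \<equiv> [:0,1:]"

lemma monom1: "monom (1::int) k = X ^ k"
  by (simp add: monom_altdef)

lemma pm_ival: "pm (mset_set {a..<b}) = (\<Sum>k\<in>{a..<b}. X ^ k)"
  by (simp add: pm_set[of _ id, simplified] monom1)

lemma geom: "a \<le> b \<Longrightarrow> (1 - X) * (\<Sum>k\<in>{a..<b}. X ^ k) = X ^ a - X ^ b"
proof (induction b)
  case 0 then show ?case by simp
next
  case (Suc b)
  show ?case
  proof (cases "a = Suc b")
    case True then show ?thesis by simp
  next
    case False
    then have "a \<le> b" using Suc by simp
    then have "(\<Sum>k\<in>{a..<Suc b}. X ^ k) = (\<Sum>k\<in>{a..<b}. X ^ k) + X ^ b" by simp
    then show ?thesis using Suc.IH[OF \<open>a \<le> b\<close>] by (simp add: algebra_simps)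
  qed
qed

definition MA :: "nat \<Rightarrow> nat multiset" where "MA d = mset_set {0..<d}"
definition MA' :: "nat \<Rightarrow> nat multiset" where "MA' d = add_mset 1 (mset_set {0..<d-1})"
definition MB :: "nat \<Rightarrow> nat multiset" where "MB d = {#0,1,3,d#} + mset_set {3..<d-1}"
definition MB' :: "nat \<Rightarrow> nat multiset" where "MB' d = {#0, d+1#} + mset_set {2..<d}"

lemma alg1:
  fixes x p t u :: "'a::comm_ring_1"
  assumes "(1-x)*p = 1 - u*x" "(1-x)*t = x^2 - u*x"
  shows "(1-x)*(1 + u*x*x + t) = (1-x)*(p*(1-x+x^2))"
proof -
  have "(1-x)*(1 + u*x*x + t) = (1-x)*(1 + u*x*x) + (1-x)*t" by (simp add: algebra_simps)
  also have "\<dots> = (1-x)*(1 + u*x*x) + (x^2 - u*x)" using assms by simp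
  also have "\<dots> = (1 - u*x)*(1-x+x^2)" by (simp add: algebra_simps power2_eq_square)
  also have "\<dots> = ((1-x)*p)*(1-x+x^2)" using assms by simp
  finally show ?thesis by (simp add: mult.assoc)
qed

lemma alg2:
  fixes x p t u :: "'a::comm_ring_1"
  assumes "(1-x)*p = 1 - u" "(1-x)*t = x^3 - u"
  shows "(1-x)*(1 + x + x^3 + u*x + t) = (1-x)*((x + p)*(1-x+x^2))"
proof -
  have "(1-x)*(1 + x + x^3 + u*x + t) = (1-x)*(1 + x + x^3 + u*x) + (1-x)*t" by (simp add: algebra_simps)
  also have "\<dots> = (1-x)*(1 + x + x^3 + u*x) + (x^3 - u)" using assms by simp
  also have "\<dots> = ((1-x)*x + (1 - u))*(1-x+x^2)" by (simp add: algebra_simps power2_eq_square power3_eq_cube)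
  also have "\<dots> = ((1-x)*x + (1-x)*p)*(1-x+x^2)" using assms by simp
  finally show ?thesis by (simp add: algebra_simps)
qed

lemma key_poly:
  assumes "d \<ge> 4"
  shows "pm (MA d) * pm (MB d) = pm (MA' d) * pm (MB' d)"
proof -
  obtain m where m: "d = Suc m" "m \<ge> 3" using assms by (cases d) auto
  define G where "G = 1 - X + X^2"
  have sA: "pm (MA d) = (\<Sum>k\<in>{0..<d}. X ^ k)" by (simp add: MA_def pm_ival)
  have sA': "pm (MA' d) = X + (\<Sum>k\<in>{0..<m}. X ^ k)"
    by (simp add: MA'_def pm_def m sum_unfold_sum_mset[symmetric] monom1)
  have sB': "pm (MB' d) = 1 + X^m * X * X + (\<Sum>k\<in>{2..<d}. X ^ k)"
    by (simp add: MB'_def pm_def m sum_unfold_sum_mset[symmetric] monom1 algebra_simps)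
  have sB: "pm (MB d) = 1 + X + X^3 + X^m * X + (\<Sum>k\<in>{3..<m}. X ^ k)"
    by (simp add: MB_def pm_def m sum_unfold_sum_mset[symmetric] monom1 algebra_simps)
  have g1: "(1 - X) * (\<Sum>k\<in>{0..<d}. X ^ k) = 1 - X^m * X"
    using geom[of 0 d] by (simp add: m mult.commute)
  have g2: "(1 - X) * (\<Sum>k\<in>{2..<d}. X ^ k) = X^2 - X^m * X"
    using geom[of 2 d] m by (simp add: mult.commute)
  have g3: "(1 - X) * (\<Sum>k\<in>{0..<m}. X ^ k) = 1 - X^m"
    using geom[of 0 m] by simp
  have g4: "(1 - X) * (\<Sum>k\<in>{3..<m}. X ^ k) = X^3 - X^m"
    using geom[of 3 m] m by simp
  have Y0: "(1 - X) \<noteq> 0"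
  proof
    assume "1 - X = 0"
    then have "coeff (1 - X) 0 = 0" by simp
    then show False by simp
  qed
  have "pm (MB' d) = pm (MA d) * G"
    using alg1[OF g1 g2] Y0 unfolding sB' sA G_def by simp
  moreover have "pm (MB d) = pm (MA' d) * G"
    using alg2[OF g3 g4] Y0 unfolding sB sA' G_def by simp
  ultimately show ?thesis by (simp add: algebra_simps)
qed

definition dmat :: "('a::finite \<Rightarrow> complex) \<Rightarrow> complex^'a^'a" where
  "dmat a = (\<chi> i j. if i = j then a i else 0)"

lemma tensor_dmat: "tensor_state (dmat a) (dmat b) = dmat (\<lambda>p. a (fst p) * b (snd p))"
  unfolding tensor_state_def dmat_def
  by (simp add: vec_eq_iff prod_eq_iff)

definition pmat :: "('a::finite \<Rightarrow> 'a) \<Rightarrow> complex^'a^'a" where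
  "pmat \<sigma> = (\<chi> x y. if x = \<sigma> y then 1 else 0)"

lemma sum_ind2: "(\<Sum>v\<in>UNIV. (if x = \<sigma> v then 1 else 0) * (if y = \<sigma> v then (1::complex) else 0) * c v)
    = (if x = y then c (inv \<sigma> x) else 0)" if "bij \<sigma>" for \<sigma> :: "'a::finite \<Rightarrow> 'a"
proof -
  have eq: "\<And>v. (x = \<sigma> v) = (v = inv \<sigma> x)" using that
    by (metis bij_inv_eq_iff)
  have "(\<Sum>v\<in>UNIV. (if x = \<sigma> v then 1 else 0) * (if y = \<sigma> v then (1::complex) else 0) * c v)
     = (\<Sum>v\<in>UNIV. if v = inv \<sigma> x then (if y = \<sigma> v then c v else 0) else 0)"
    by (intro sum.cong) (auto simp: eq)
  also have "\<dots> = (if y = \<sigma> (inv \<sigma> x) then c (inv \<sigma> x) else 0)" by simp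
  also have "\<dots> = (if x = y then c (inv \<sigma> x) else 0)" using that
    by (auto simp: bij_is_surj surj_f_inv_f)
  finally show ?thesis .
qed

lemma unitary_pmat:
  fixes \<sigma> :: "'a::finite \<Rightarrow> 'a"
  assumes "bij \<sigma>"
  shows "unitary_mat (pmat \<sigma>)"
proof -
  define P :: "complex^'a^'a" where "P = (\<chi> x y. if x = \<sigma> y then 1 else 0)"
  have a: "adj_mat P = (\<chi> x y. if y = \<sigma> x then 1 else 0)"
    by (simp add: adj_mat_def P_def vec_eq_iff)
  have 1: "P ** adj_mat P = mat 1"
    unfolding a matrix_matrix_mult_def
    using sum_ind2[OF assms, of _ _ "\<lambda>_. 1"]
    by (simp add: P_def mat_def vec_eq_iff)
  have 2: "adj_mat P ** P = mat 1"
  proof -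
    have "\<And>x y. (\<Sum>v\<in>UNIV. (if v = \<sigma> x then 1 else 0) * (if v = \<sigma> y then (1::complex) else 0))
       = (if x = y then 1 else 0)"
    proof -
      fix x y
      have "(\<Sum>v\<in>UNIV. (if v = \<sigma> x then 1 else 0) * (if v = \<sigma> y then (1::complex) else 0))
        = (\<Sum>v\<in>UNIV. if v = \<sigma> x then (if \<sigma> x = \<sigma> y then 1 else 0) else 0)"
        by (intro sum.cong) auto
      also have "\<dots> = (if x = y then 1 else 0)"
        using assms by (simp add: bij_def inj_eq)
      finally show "?thesis x y" .
    qed
    then show ?thesis unfolding a matrix_matrix_mult_def by (simp add: P_def mat_def vec_eq_iff)
  qed
  show ?thesis using 1 2 by (simp add: unitary_mat_def pmat_def P_def)
qed

lemma lu_pmat: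
  fixes \<sigma> :: "'a::finite \<Rightarrow> 'a"
  assumes "bij \<sigma>" "\<And>p. w' (\<sigma> p) = w p"
  shows "lu_apply (pmat \<sigma>) (pmat \<sigma>) (dmat w) = dmat w'"
proof -
  define P :: "complex^'a^'a" where "P = (\<chi> x y. if x = \<sigma> y then 1 else 0)"
  have 1: "P ** dmat w = (\<chi> x v. (if x = \<sigma> v then 1 else 0) * w v)"
  proof -
    have "\<And>x v. (\<Sum>u\<in>UNIV. (if x = \<sigma> u then 1 else 0) * (if u = v then w u else 0)) =
        (if x = \<sigma> v then 1 else 0) * w v"
    proof -
      fix x v
      have "(\<Sum>u\<in>UNIV. (if x = \<sigma> u then 1 else 0) * (if u = v then w u else 0)) =
         (\<Sum>u\<in>UNIV. if u = v then (if x = \<sigma> v then 1 else 0) * w v else 0)"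
        by (intro sum.cong) auto
      then show "?thesis x v" by simp
    qed
    then show ?thesis unfolding matrix_matrix_mult_def by (simp add: P_def dmat_def vec_eq_iff)
  qed
  have t: "transpose P = (\<chi> x y. if y = \<sigma> x then 1 else 0)"
    by (simp add: transpose_def P_def vec_eq_iff)
  have "\<And>x y. (\<Sum>v\<in>UNIV. (if x = \<sigma> v then 1 else 0) * w v * (if y = \<sigma> v then 1 else 0))
     = (if x = y then w' x else 0)"
  proof -
    fix x y
    have "(\<Sum>v\<in>UNIV. (if x = \<sigma> v then 1 else 0) * w v * (if y = \<sigma> v then 1 else 0))
      = (\<Sum>v\<in>UNIV. (if x = \<sigma> v then 1 else 0) * (if y = \<sigma> v then (1::complex) else 0) * w v)"
      by (simp add: algebra_simps)
    also have "\<dots> = (if x = y then w (inv \<sigma> x) else 0)" by (rule sum_ind2[OF assms(1)])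
    also have "\<dots> = (if x = y then w' x else 0)"
      using assms by (metis bij_inv_eq_iff)
    finally show "?thesis x y" .
  qed
  then have "P ** dmat w ** transpose P = dmat w'"
    unfolding 1 t unfolding matrix_matrix_mult_def by (simp add: dmat_def vec_eq_iff)
  then show ?thesis by (simp add: lu_apply_def pmat_def P_def)
qed

lemma is_state_dmat: "is_state (dmat a) \<longleftrightarrow> (\<Sum>i\<in>UNIV. (cmod (a i))\<^sup>2) = 1"
proof -
  have "\<And>i. (\<Sum>j\<in>UNIV. (cmod (dmat a $ i $ j))\<^sup>2) = (cmod (a i))\<^sup>2"
  proof -
    fix i
    have "(\<Sum>j\<in>UNIV. (cmod (dmat a $ i $ j))\<^sup>2) = (\<Sum>j\<in>UNIV. if j = i then (cmod (a i))\<^sup>2 else 0)"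
      by (intro sum.cong) (auto simp: dmat_def)
    then show "?thesis i" by simp
  qed
  then show ?thesis by (simp add: is_state_def)
qed

lemma rank_dmat:
  fixes a :: "'n::finite \<Rightarrow> complex"
  assumes "\<And>i. a i \<noteq> 0"
  shows "schmidt_rank (dmat a) = CARD('n)"
proof -
  have "cart_basis \<subseteq> vec.span (rows (dmat a))"
  proof
    fix v assume "v \<in> (cart_basis :: (complex^'n) set)"
    then obtain i where v: "v = axis i 1" by (auto simp: cart_basis_def)
    have r: "row i (dmat a) \<in> rows (dmat a)" by (auto simp: rows_def)
    have "v = (1 / a i) *s row i (dmat a)"
      using assms[of i] by (auto simp: v vec_eq_iff row_def dmat_def axis_def)
    then show "v \<in> vec.span (rows (dmat a))"
      using r by (metis vec.span_base vec.span_scale)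
  qed
  then have "vec.span (rows (dmat a)) = UNIV"
    by (metis top.extremum_uniqueI span_cart_basis vec.span_mono vec.span_span)
  then have "vec.dim (rows (dmat a)) = vec.dim (UNIV :: (complex^'n) set)"
    by (metis vec.dim_span)
  then show ?thesis by (simp add: schmidt_rank_def row_rank_def_gen card_cart_basis)
qed

lemma adj_mult: "adj_mat (A ** B) = adj_mat B ** adj_mat (A :: complex^'n^'m)"
  unfolding adj_mat_def matrix_matrix_mult_def
  by (simp add: vec_eq_iff mult.commute)

lemma adj_adj: "adj_mat (adj_mat A) = A"
  by (simp add: adj_mat_def vec_eq_iff)

lemma unitary_adj: "unitary_mat U \<Longrightarrow> unitary_mat (adj_mat U)"
  by (simp add: unitary_mat_def adj_adj)

lemma transpose_unitary:
  fixes U :: "complex^'n^'n"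
  assumes "unitary_mat U"
  shows "transpose U ** adj_mat (transpose U) = mat 1"
proof -
  have "transpose U ** adj_mat (transpose U) = (\<chi> i k. cnj ((adj_mat U ** U) $ i $ k))"
    unfolding adj_mat_def matrix_matrix_mult_def transpose_def
    by (simp add: vec_eq_iff mult.commute)
  also have "\<dots> = mat 1" using assms
    by (simp add: unitary_mat_def mat_def vec_eq_iff)
  finally show ?thesis .
qed

lemma gram_lu:
  fixes UA UB psi :: "complex^'n^'n"
  assumes "unitary_mat UB"
  shows "(UA ** psi ** transpose UB) ** adj_mat (UA ** psi ** transpose UB)
     = UA ** (psi ** adj_mat psi) ** adj_mat UA"
proof -
  have "(UA ** psi ** transpose UB) ** adj_mat (UA ** psi ** transpose UB)
     = UA ** psi ** (transpose UB ** adj_mat (transpose UB)) ** adj_mat psi ** adj_mat UA"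
    by (simp add: adj_mult matrix_mul_assoc)
  also have "\<dots> = UA ** (psi ** adj_mat psi) ** adj_mat UA"
    using transpose_unitary[OF assms] by (simp add: matrix_mul_assoc)
  finally show ?thesis .
qed

lemma gram_dmat: "dmat a ** adj_mat (dmat a) = dmat (\<lambda>i. of_real ((cmod (a i))\<^sup>2))"
proof -
  have "\<And>i j. (\<Sum>k\<in>UNIV. (if i = k then a i else 0) * cnj (if j = k then a j else 0)) =
      (if i = j then of_real ((cmod (a i))\<^sup>2) else 0)"
  proof -
    fix i j
    have "(\<Sum>k\<in>UNIV. (if i = k then a i else 0) * cnj (if j = k then a j else 0)) =
      (\<Sum>k\<in>UNIV. if k = i then (if i = j then a i * cnj (a i) else 0) else 0)"
      by (intro sum.cong) auto
    also have "\<dots> = (if i = j then a i * cnj (a i) else 0)" by simp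
    also have "\<dots> = (if i = j then of_real ((cmod (a i))\<^sup>2) else 0)"
      by (simp only: complex_norm_square[symmetric])
    finally show "?thesis i j" .
  qed
  then show ?thesis unfolding adj_mat_def matrix_matrix_mult_def dmat_def
    by (simp add: vec_eq_iff)
qed

lemma dmat_mv: "(dmat m *v w) $ k = m k * w $ k"
proof -
  have "(\<Sum>j\<in>UNIV. (if k = j then m k else 0) * w $ j) = (\<Sum>j\<in>UNIV. if j = k then m k * w $ k else 0)"
    by (intro sum.cong) auto
  then show ?thesis by (simp add: matrix_vector_mult_def dmat_def)
qed

lemma eigen_range:
  fixes U :: "complex^'n^'n"
  assumes U: "unitary_mat U" and eq: "dmat m' = U ** dmat m ** adj_mat U"
  shows "range m \<subseteq> range m'"
proof
  fix c assume "c \<in> range m"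
  then obtain i where c: "c = m i" by auto
  define v :: "complex^'n" where "v = axis i 1"
  define w where "w = U *v v"
  have dv: "dmat m *v v = m i *s v"
    by (simp add: vec_eq_iff dmat_mv v_def axis_def)
  have vw: "adj_mat U *v w = v"
    using U by (simp add: w_def matrix_vector_mul_assoc unitary_mat_def)
  have "w \<noteq> 0"
  proof
    assume "w = 0"
    then have "v = 0" using vw by simp
    then show False unfolding v_def by (metis axis_nth zero_index zero_neq_one)
  qed
  then obtain k where k: "w $ k \<noteq> 0" by (auto simp: vec_eq_iff)
  have "dmat m' *v w = U *v (dmat m *v (adj_mat U *v w))"
    by (simp add: eq matrix_vector_mul_assoc matrix_mul_assoc)
  also have "\<dots> = m i *s w" using vw dv by (simp add: vector_scalar_commute w_def)
  finally have "(dmat m' *v w) $ k = m i * w $ k" by simp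
  then have "m' k = m i" using k by (simp add: dmat_mv)
  then show "c \<in> range m'" using c by (metis rangeI)
qed

lemma LU_range:
  fixes a b :: "'n::finite \<Rightarrow> complex"
  assumes "LU_equiv (dmat a) (dmat b)"
  shows "range (\<lambda>i. complex_of_real ((cmod (a i))\<^sup>2)) = range (\<lambda>i. complex_of_real ((cmod (b i))\<^sup>2))"
proof -
  obtain UA UB where u: "unitary_mat UA" "unitary_mat UB" "dmat b = UA ** dmat a ** transpose UB"
    using assms by (auto simp: LU_equiv_def lu_apply_def)
  define ma where "ma = (\<lambda>i. complex_of_real ((cmod (a i))\<^sup>2))"
  define mb where "mb = (\<lambda>i. complex_of_real ((cmod (b i))\<^sup>2))"
  have "dmat b ** adj_mat (dmat b) = UA ** (dmat a ** adj_mat (dmat a)) ** adj_mat UA"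
    using gram_lu[OF u(2), of UA "dmat a"] u(3) by simp
  then have e1: "dmat mb = UA ** dmat ma ** adj_mat UA"
    unfolding gram_dmat ma_def mb_def .
  have e2: "dmat ma = adj_mat UA ** dmat mb ** adj_mat (adj_mat UA)"
  proof -
    have "adj_mat UA ** dmat mb ** UA = (adj_mat UA ** UA) ** dmat ma ** (adj_mat UA ** UA)"
      by (simp add: e1 matrix_mul_assoc)
    then show ?thesis using u(1) by (simp add: unitary_mat_def adj_adj)
  qed
  show ?thesis
    using eigen_range[OF u(1) e1] eigen_range[OF unitary_adj[OF u(1)] e2]
    unfolding ma_def mb_def by blast
qed

definition Nrm :: "('n::finite \<Rightarrow> nat) \<Rightarrow> real" where
  "Nrm e = (\<Sum>j\<in>UNIV. 4 ^ e j)"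

definition ampl :: "('n::finite \<Rightarrow> nat) \<Rightarrow> 'n \<Rightarrow> complex" where
  "ampl e i = complex_of_real (2 ^ e i / sqrt (Nrm e))"

lemma Nrm_pos: "Nrm e > 0"
  unfolding Nrm_def by (intro sum_pos) auto

lemma pow2sq: "((2::real) ^ k)\<^sup>2 = 4 ^ k"
  by (simp add: power2_eq_square power_mult_distrib[symmetric])

lemma cmod_ampl: "(cmod (ampl e i))\<^sup>2 = 4 ^ e i / Nrm e"
proof -
  have "(cmod (ampl e i))\<^sup>2 = (2 ^ e i / sqrt (Nrm e))\<^sup>2"
    unfolding ampl_def norm_of_real using Nrm_pos[of e] by simp
  also have "\<dots> = 4 ^ e i / Nrm e"
    using Nrm_pos[of e] by (simp add: power_divide pow2sq)
  finally show ?thesis .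
qed

lemma ampl_nz: "ampl e i \<noteq> 0"
  using Nrm_pos[of e] by (simp add: ampl_def)

lemma state_ampl: "is_state (dmat (ampl e))"
proof -
  have "(\<Sum>i\<in>UNIV. (cmod (ampl e i))\<^sup>2) = (\<Sum>i\<in>UNIV. 4 ^ e i) / Nrm e"
    by (simp add: cmod_ampl sum_divide_distrib)
  also have "\<dots> = 1" using Nrm_pos[of e] by (simp add: Nrm_def)
  finally show ?thesis by (simp add: is_state_dmat)
qed

lemma no_LU:
  fixes e1 e2 :: "'n::finite \<Rightarrow> nat"
  assumes z1: "0 \<in> range e1" and z2: "0 \<in> range e2" and k1: "k \<in> range e1" and k2: "k \<notin> range e2"
  shows "\<not> LU_equiv (dmat (ampl e1)) (dmat (ampl e2))"
proof
  assume "LU_equiv (dmat (ampl e1)) (dmat (ampl e2))"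
  from LU_range[OF this]
  have "of_real ` range (\<lambda>i. 4 ^ e1 i / Nrm e1) = (of_real ` range (\<lambda>i. 4 ^ e2 i / Nrm e2) :: complex set)"
    by (simp add: cmod_ampl image_image)
  then have S: "range (\<lambda>i. 4 ^ e1 i / Nrm e1) = range (\<lambda>i. 4 ^ e2 i / Nrm e2)"
    by (simp add: inj_image_eq_iff inj_of_real)
  have P1: "Nrm e1 > 0" "Nrm e2 > 0" by (simp_all add: Nrm_pos)
  have ge: "1 / Nrm e2 \<le> 1 / Nrm e1" if S': "range (\<lambda>i. 4 ^ e1 i / Nrm e1) = range (\<lambda>i. 4 ^ e2 i / Nrm e2)"
     and z: "0 \<in> range e1" and p: "Nrm e1 > 0" "Nrm e2 > 0" for e1 e2 :: "'n \<Rightarrow> nat"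
  proof -
    obtain i where "e1 i = 0" using z by auto
    then have "1 / Nrm e1 \<in> range (\<lambda>i. 4 ^ e2 i / Nrm e2)"
      using S' by (metis (mono_tags, lifting) power_0 rangeI)
    then obtain j where j: "1 / Nrm e1 = 4 ^ e2 j / Nrm e2" by auto
    have "(1::real) \<le> 4 ^ e2 j" by simp
    then have "1 / Nrm e2 \<le> 4 ^ e2 j / Nrm e2" using p by (simp add: divide_right_mono)
    then show ?thesis using j by simp
  qed
  have "1 / Nrm e2 \<le> 1 / Nrm e1" using ge[OF S z1 P1] .
  moreover have "1 / Nrm e1 \<le> 1 / Nrm e2" using ge[OF S[symmetric] z2 P1(2) P1(1)] .
  ultimately have N: "Nrm e1 = Nrm e2" using P1 by simp
  obtain i where "e1 i = k" using k1 by auto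
  then have "4 ^ k / Nrm e1 \<in> range (\<lambda>i. 4 ^ e2 i / Nrm e2)"
    using S by (metis (mono_tags, lifting) rangeI)
  then obtain j where "4 ^ k / Nrm e1 = 4 ^ e2 j / Nrm e2" by auto
  then have "(4::real) ^ k = 4 ^ e2 j" using N P1 by simp
  then have "k = e2 j" by (simp add: power_inject_exp)
  then show False using k2 by auto
qed

lemma ampl_mult: "ampl e1 i * ampl e2 j = complex_of_real (2 ^ (e1 i + e2 j) / sqrt (Nrm e1 * Nrm e2))"
  by (simp add: ampl_def real_sqrt_mult power_add)

lemma Nrm_prod:
  fixes e1 e2 :: "'n::finite \<Rightarrow> nat"
  shows "Nrm e1 * Nrm e2 = (\<Sum>p\<in>UNIV. 4 ^ (e1 (fst p) + e2 (snd p)))"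
proof -
  have "Nrm e1 * Nrm e2 = (\<Sum>i\<in>UNIV. \<Sum>j\<in>UNIV. (4::real) ^ e1 i * 4 ^ e2 j)"
    by (simp add: Nrm_def sum_product)
  also have "\<dots> = (\<Sum>p\<in>(UNIV::'n set) \<times> (UNIV::'n set). 4 ^ (e1 (fst p) + e2 (snd p)))"
    by (simp add: sum.cartesian_product power_add split_beta)
  finally show ?thesis by simp
qed

lemma set_exps: "image_mset e (mset_set (UNIV::'n::finite set)) = M \<Longrightarrow> (k \<in> range e) = (k \<in># M)"
  using finite_class.finite_UNIV[where 'a='n] by auto

lemma sizes:
  assumes "d \<ge> 4"
  shows "size (MA d) = d" "size (MA' d) = d" "size (MB d) = d" "size (MB' d) = d"
  using assms by (auto simp: MA_def MA'_def MB_def MB'_def)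

lemma mems:
  assumes "d \<ge> 4"
  shows "0 \<in># MA d" "0 \<in># MA' d" "0 \<in># MB' d" "d - 1 \<in># MA d" "d - 1 \<notin># MA' d"
    "1 \<in># MA d" "1 \<notin># MB' d"
  using assms by (auto simp: MA_def MA'_def MB_def MB'_def)

lemma key_mset:
  fixes eA eB eA' eB' :: "'n::finite \<Rightarrow> nat"
  assumes "CARD('n) \<ge> 4"
    and A: "image_mset eA (mset_set UNIV) = MA CARD('n)"
    and B: "image_mset eB (mset_set UNIV) = MB CARD('n)"
    and A': "image_mset eA' (mset_set UNIV) = MA' CARD('n)"
    and B': "image_mset eB' (mset_set UNIV) = MB' CARD('n)"
  shows "image_mset (\<lambda>p. eA (fst p) + eB (snd p)) (mset_set UNIV) =
         image_mset (\<lambda>p. eA' (fst p) + eB' (snd p)) (mset_set UNIV)"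
  apply (rule pm_inj)
  unfolding pm_prod A B A' B'
  by (rule key_poly[OF assms(1)])

theorem mainTheorem10:
  assumes "CARD('n::finite) \<ge> 4"
  shows "\<exists>mu lam mub lamb :: complex^'n^'n.
    is_state mu \<and> is_state lam \<and> is_state mub \<and> is_state lamb \<and>
    schmidt_rank mu = CARD('n) \<and> schmidt_rank lam = CARD('n) \<and>
    schmidt_rank mub = CARD('n) \<and> schmidt_rank lamb = CARD('n) \<and>
    LU_equiv (tensor_state mu lam) (tensor_state mub lamb) \<and>
    \<not> (LU_equiv mu mub \<and> LU_equiv lam lamb) \<and>
    \<not> (LU_equiv lam mub \<and> LU_equiv mu lamb)"
proof -
  let ?d = "CARD('n)"
  obtain eA :: "'n \<Rightarrow> nat" where A: "image_mset eA (mset_set UNIV) = MA ?d"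
    using exps_exist sizes(1)[OF assms] by metis
  obtain eB :: "'n \<Rightarrow> nat" where B: "image_mset eB (mset_set UNIV) = MB ?d"
    using exps_exist sizes(3)[OF assms] by metis
  obtain eA' :: "'n \<Rightarrow> nat" where A': "image_mset eA' (mset_set UNIV) = MA' ?d"
    using exps_exist sizes(2)[OF assms] by metis
  obtain eB' :: "'n \<Rightarrow> nat" where B': "image_mset eB' (mset_set UNIV) = MB' ?d"
    using exps_exist sizes(4)[OF assms] by metis
  define s where "s = (\<lambda>p::'n \<times> 'n. eA (fst p) + eB (snd p))"
  define s' where "s' = (\<lambda>p::'n \<times> 'n. eA' (fst p) + eB' (snd p))"
  have "image_mset s (mset_set UNIV) = image_mset s' (mset_set UNIV)"
    unfolding s_def s'_def by (rule key_mset[OF assms A B A' B'])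
  then obtain \<sigma> where \<sigma>: "bij \<sigma>" "\<And>p. s' (\<sigma> p) = s p"
    using mset_bij by metis
  have N: "Nrm eA * Nrm eB = Nrm eA' * Nrm eB'"
  proof -
    have "Nrm eA' * Nrm eB' = (\<Sum>p\<in>UNIV. 4 ^ s' p)" unfolding s'_def by (rule Nrm_prod)
    also have "\<dots> = (\<Sum>p\<in>UNIV. 4 ^ s' (\<sigma> p))"
      using sum.reindex_bij_betw[OF \<sigma>(1), of "\<lambda>p. (4::real) ^ s' p"] by simp
    also have "\<dots> = (\<Sum>p\<in>UNIV. 4 ^ s p)" by (simp add: \<sigma>(2))
    also have "\<dots> = Nrm eA * Nrm eB" unfolding s_def by (rule Nrm_prod[symmetric])
    finally show ?thesis by simp
  qed
  define w where "w = (\<lambda>p::'n \<times> 'n. ampl eA (fst p) * ampl eB (snd p))"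
  define w' where "w' = (\<lambda>p::'n \<times> 'n. ampl eA' (fst p) * ampl eB' (snd p))"
  have ww: "w' (\<sigma> p) = w p" for p
  proof -
    have "w' (\<sigma> p) = complex_of_real (2 ^ s' (\<sigma> p) / sqrt (Nrm eA' * Nrm eB'))"
      by (simp add: w'_def ampl_mult s'_def)
    also have "\<dots> = complex_of_real (2 ^ s p / sqrt (Nrm eA * Nrm eB))"
      by (simp add: \<sigma>(2) N)
    also have "\<dots> = w p" by (simp add: w_def ampl_mult s_def)
    finally show ?thesis .
  qed
  have LU: "LU_equiv (tensor_state (dmat (ampl eA)) (dmat (ampl eB)))
                     (tensor_state (dmat (ampl eA')) (dmat (ampl eB')))"
  proof -
    have t1: "tensor_state (dmat (ampl eA)) (dmat (ampl eB)) = dmat w"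
      by (simp add: tensor_dmat w_def)
    have t2: "tensor_state (dmat (ampl eA')) (dmat (ampl eB')) = dmat w'"
      by (simp add: tensor_dmat w'_def)
    show ?thesis unfolding LU_equiv_def t1 t2
      using unitary_pmat[OF \<sigma>(1)] lu_pmat[of \<sigma> w' w, OF \<sigma>(1) ww]
      by (intro exI[of _ "pmat \<sigma>"]) simp
  qed
  have n1: "\<not> LU_equiv (dmat (ampl eA)) (dmat (ampl eA'))"
    by (rule no_LU[where k = "?d - 1"])
       (use mems[OF assms] set_exps[OF A] set_exps[OF A'] in auto)
  have n2: "\<not> LU_equiv (dmat (ampl eA)) (dmat (ampl eB'))"
    by (rule no_LU[where k = 1])
       (use mems[OF assms] set_exps[OF A] set_exps[OF B'] in auto)
  show ?thesis
    apply (rule exI[of _ "dmat (ampl eA)"], rule exI[of _ "dmat (ampl eB)"],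
           rule exI[of _ "dmat (ampl eA')"], rule exI[of _ "dmat (ampl eB')"])
    using LU n1 n2 by (simp add: state_ampl rank_dmat ampl_nz)
qed

end
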